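(* Let $x\in\mathbb{R}^n$ and consider the linear model $\Phi(x;w)=\Phi(x;(A,b))=Ax+b$ with parameter $w=(A,b)$, $A\in\mathbb{R}^{m\times n}$, $b\in\mathbb{R}^m$, and the divergence $div(u,v)=\|u-v\|_2^2$. Let $K\ge1$, let $P_1,\dots,P_K$ be probability measures on $\mathbb{R}^n$ with finite second moments, $P_k$ supported on $\mathcal{D}_k$, and let $q_1,\dots,q_K\ge0$ with $\sum_kq_k=1$. Let $J(x)$ denote the Jacobian of $w\mapsto Ax+b$ (which depends only on $x$) and set $H_k=\int_{\mathcal{D}_k}J(x)^\top(2I_m)J(x)\,P_k(dx)$. Suppose the datasets are homogeneous, i.e. $H_1=\dots=H_K$. Then for any local parameters $w_k=(A_k,b_k)$, $k=1,\dots,K$, the weighted average $\hat w=\sum_{k=1}^Kq_kw_k$ is a minimizer of $$w\mapsto\sum_{k=1}^K q_k\int_{\mathcal{D}_k}div(\Phi(x;w_k),\Phi(x;w))\,P_k(dx).$$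
   Context: Here $w_k$ are the parameters of local models trained on client datasets $\mathcal{D}_k$ with distributions $P_k$, and the minimized objective is the distillation objective whose minimizer is the global model. "Homogeneous" means the matrices $H_k$ (the Hessians of the objective's $k$-th term, $\int J^\top \partial_u^2 div\, J\,dP_k$) coincide for all clients. *)

theory Defs
  imports "HOL-Probability.Probability"
begin

text \<open>Parameters w = (A,b) with A an m x n matrix and b in R^m are flattened into
  a single real vector indexed by the finite type ('m x 'n) + 'm.\<close>

definition param_A :: "real^(('m::finite \<times> 'n::finite) + 'm) \<Rightarrow> real^'n^'m" where
  "param_A w = (\<chi> i j. w $ Inl (i, j))"

definition param_b :: "real^(('m::finite \<times> 'n::finite) + 'm) \<Rightarrow> real^'m" where
  "param_b w = (\<chi> i. w $ Inr i)"

definition param :: "real^'n^'m \<Rightarrow> real^'m \<Rightarrow> real^(('m::finite \<times> 'n::finite) + 'm)" where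
  "param A b = (\<chi> p. case p of Inl (i, j) \<Rightarrow> A $ i $ j | Inr i \<Rightarrow> b $ i)"

definition Phi :: "real^'n \<Rightarrow> real^(('m::finite \<times> 'n::finite) + 'm) \<Rightarrow> real^'m" where
  "Phi x w = param_A w *v x + param_b w"

definition dvg :: "real^'m::finite \<Rightarrow> real^'m \<Rightarrow> real" where
  "dvg u v = (norm (u - v))\<^sup>2"

definition Jac :: "real^'n \<Rightarrow> real^(('m::finite \<times> 'n::finite) + 'm)^'m" where
  "Jac x = matrix (\<lambda>w. Phi x w)"

definition Hmat :: "(real^'n) measure \<Rightarrow> (real^'n) set
     \<Rightarrow> real^(('m::finite \<times> 'n::finite) + 'm)^(('m \<times> 'n) + 'm)" where
  "Hmat Pk Dk = (LINT x:Dk|Pk. transpose (Jac x) ** ((2::real) *\<^sub>R mat 1) ** Jac x)"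

definition objective :: "nat \<Rightarrow> (nat \<Rightarrow> real) \<Rightarrow> (nat \<Rightarrow> (real^'n) measure) \<Rightarrow> (nat \<Rightarrow> (real^'n) set)
     \<Rightarrow> (nat \<Rightarrow> real^(('m::finite \<times> 'n::finite) + 'm)) \<Rightarrow> real^(('m \<times> 'n) + 'm) \<Rightarrow> real" where
  "objective K q P D W w = (\<Sum>k\<in>{1..K}. q k * (LINT x:D k|P k. dvg (Phi x (W k)) (Phi x w)))"

end

theory Submission imports Defs begin
lemma if10: "(if P then 1 else 0) * (y::real) = (if P then y else 0)" by simp
lemma Jac_nth: "(Jac x :: real^(('m::finite \<times> 'n::finite) + 'm)^'m) $ i $ p = (case p of Inl (i',j) \<Rightarrow> if i' = i then x$j else 0 | Inr i' \<Rightarrow> if i' = i then 1 else 0)"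
  by (cases p) (auto simp: Jac_def matrix_def Phi_def param_A_def param_b_def axis_def matrix_vector_mult_def if10)

lemma Phi_lin: "linear (Phi x)"
  unfolding Phi_def
  apply (rule linearI)
  apply (simp_all add: param_A_def param_b_def vec_eq_iff matrix_vector_mult_def algebra_simps sum.distrib sum_distrib_left)
  done

definition MM :: "real^'n \<Rightarrow> real^(('m::finite \<times> 'n::finite) + 'm)^(('m \<times> 'n) + 'm)" where
  "MM x = transpose (Jac x) ** ((2::real) *\<^sub>R mat 1) ** Jac x"

lemma if10': "(y::real) * (if P then 1 else 0) = (if P then y else 0)" by simp
lemma scal_mat: "(A::real^'a^'b::finite) ** ((c::real) *\<^sub>R mat 1) = c *\<^sub>R A"
proof -
  have h: "(y::real) * (c * (if P then 1 else 0)) = (if P then c * y else 0)" for y P by simp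
  show ?thesis by (simp add: vec_eq_iff matrix_matrix_mult_def mat_def h)
qed
lemma MM_nth: "MM x $ p $ q = 2 * (\<Sum>i\<in>UNIV. Jac x $ i $ p * Jac x $ i $ q)"
  unfolding MM_def scal_mat by (simp add: matrix_matrix_mult_def transpose_def sum_distrib_left mult.assoc)

lemma cont_J: "continuous_on UNIV (\<lambda>x. (Jac x :: real^(('m::finite \<times> 'n::finite) + 'm)^'m) $ i $ p)"
proof (cases p)
  case (Inl a)
  then obtain i' j where "p = Inl (i', j)" by (cases a) auto
  then show ?thesis by (cases "i' = i") (simp_all add: Jac_nth continuous_intros)
next
  case (Inr i')
  then show ?thesis by (cases "i' = i") (simp_all add: Jac_nth continuous_intros)
qed

lemma cont_MM: "continuous_on UNIV (MM :: real^'n \<Rightarrow> real^(('m::finite \<times> 'n::finite) + 'm)^(('m \<times> 'n) + 'm))"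
proof -
  have eq: "MM = (\<lambda>x. \<chi> p q. 2 * (\<Sum>i\<in>UNIV. (Jac x :: real^(('m \<times> 'n) + 'm)^'m) $ i $ p * Jac x $ i $ q))"
    by (auto simp: vec_eq_iff MM_nth)
  then show ?thesis
    apply (subst eq)
    apply (rule continuous_on_vec_lambda)
    apply (rule continuous_on_vec_lambda)
    apply (intro continuous_on_mult_left continuous_on_sum continuous_on_mult cont_J)
    done
qed

lemma J_bound: "\<bar>(Jac x :: real^(('m::finite \<times> 'n::finite) + 'm)^'m) $ i $ p\<bar> \<le> 1 + norm x"
proof (cases p)
  case (Inl a)
  then obtain i' j where "p = Inl (i', j)" by (cases a) auto
  then show ?thesis using component_le_norm_cart[of x j] by (simp add: Jac_nth)
next
  case (Inr i')
  then show ?thesis by (simp add: Jac_nth)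
qed

lemma MM_entry_bound: "\<bar>(MM x :: real^(('m::finite \<times> 'n::finite) + 'm)^(('m \<times> 'n) + 'm)) $ p $ q\<bar>
   \<le> 2 * CARD('m) * (2 + 2 * (norm x)\<^sup>2)"
proof -
  have "\<bar>MM x $ p $ q\<bar> \<le> 2 * (\<Sum>i\<in>(UNIV::'m set). \<bar>Jac x $ i $ p * Jac x $ i $ q\<bar>)"
    unfolding MM_nth abs_mult
    using sum_abs[of "\<lambda>i. Jac x $ i $ p * Jac x $ i $ q" UNIV] by (simp add: abs_mult)
  also have "\<dots> \<le> 2 * (\<Sum>i\<in>(UNIV::'m set). (2 + 2 * (norm x)\<^sup>2))"
  proof -
    have "\<bar>Jac x $ i $ p * Jac x $ i $ q\<bar> \<le> 2 + 2 * (norm x)\<^sup>2" for i :: 'm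
    proof -
      have "\<bar>Jac x $ i $ p * Jac x $ i $ q\<bar> \<le> (1 + norm x) * (1 + norm x)"
        unfolding abs_mult by (intro mult_mono J_bound) auto
      also have "\<dots> \<le> 2 + 2 * (norm x)\<^sup>2"
      proof -
        have "(1 + norm x) * (1 + norm x) = 2 + 2 * (norm x)\<^sup>2 - (1 - norm x)\<^sup>2"
          by (simp add: power2_eq_square algebra_simps)
        moreover have "0 \<le> (1 - norm x)\<^sup>2" by simp
        ultimately show ?thesis by linarith
      qed
      finally show ?thesis .
    qed
    then show ?thesis by (intro mult_left_mono sum_mono) auto
  qed
  finally show ?thesis by simp
qed

lemma J_mult: "Jac x *v d = Phi x d"
  using fun_cong[OF matrix_vector_mul(2)[OF Phi_lin[of x]], of d]
  by (simp add: Jac_def)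

lemma scaleR_mm: "((c::real) *\<^sub>R (A::real^'a::finite^'b::finite)) ** (B::real^'c::finite^'a) = c *\<^sub>R (A ** B)"
  by (simp add: vec_eq_iff matrix_matrix_mult_def sum_distrib_left mult.assoc)

lemma MM_quad: "d \<bullet> (MM x *v d) = 2 * (norm (Phi x d))\<^sup>2"
proof -
  have "MM x *v d = 2 *\<^sub>R (transpose (Jac x) *v (Jac x *v d))"
    unfolding MM_def scal_mat
    by (simp add: scaleR_mm matrix_vector_mul_assoc scaleR_matrix_vector_assoc)
  then have "d \<bullet> (MM x *v d) = 2 * (d \<bullet> (transpose (Jac x) *v (Jac x *v d)))" by simp
  also have "d \<bullet> (transpose (Jac x) *v (Jac x *v d)) = (Jac x *v d) \<bullet> (Jac x *v d)"
    by (metis dot_lmul_matrix vector_transpose_matrix)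
  finally show ?thesis by (simp add: J_mult power2_norm_eq_inner)
qed

lemma MM_norm: "norm (MM x :: real^(('m::finite \<times> 'n::finite) + 'm)^(('m \<times> 'n) + 'm))
   \<le> real (CARD(('m \<times> 'n) + 'm) * CARD(('m \<times> 'n) + 'm)) * (2 * CARD('m) * (2 + 2 * (norm x)\<^sup>2))"
proof -
  let ?B = "2 * CARD('m) * (2 + 2 * (norm x)\<^sup>2)"
  have "norm (MM x :: real^(('m \<times> 'n) + 'm)^(('m \<times> 'n) + 'm)) \<le> (\<Sum>p\<in>UNIV. norm ((MM x :: real^(('m \<times> 'n) + 'm)^(('m \<times> 'n) + 'm)) $ p))"
    unfolding norm_vec_def[of "(MM x :: real^(('m \<times> 'n) + 'm)^(('m \<times> 'n) + 'm))"] using L2_set_le_sum[of UNIV "\<lambda>p. norm ((MM x :: real^(('m \<times> 'n) + 'm)^(('m \<times> 'n) + 'm)) $ p)"] by simp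
  also have "\<dots> \<le> (\<Sum>p\<in>(UNIV::(('m \<times> 'n) + 'm) set). \<Sum>q\<in>(UNIV::(('m \<times> 'n) + 'm) set). ?B)"
  proof (rule sum_mono)
    fix p :: "('m \<times> 'n) + 'm"
    have "norm ((MM x :: real^(('m \<times> 'n) + 'm)^(('m \<times> 'n) + 'm)) $ p) \<le> (\<Sum>q\<in>UNIV. \<bar>(MM x :: real^(('m \<times> 'n) + 'm)^(('m \<times> 'n) + 'm)) $ p $ q\<bar>)" by (rule norm_le_l1_cart)
    also have "\<dots> \<le> (\<Sum>q\<in>(UNIV::(('m \<times> 'n) + 'm) set). ?B)"
      using MM_entry_bound[of x p] by (intro sum_mono) auto
    finally show "norm ((MM x :: real^(('m \<times> 'n) + 'm)^(('m \<times> 'n) + 'm)) $ p) \<le> (\<Sum>q\<in>(UNIV::(('m \<times> 'n) + 'm) set). ?B)" .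
  qed
  finally show ?thesis by simp
qed

lemma MM_set_integrable:
  assumes "prob_space P" "sets P = sets borel" "integrable P (\<lambda>x. (norm x)\<^sup>2)" "D \<in> sets borel"
  shows "set_integrable P D (MM :: real^'n::finite \<Rightarrow> real^(('m::finite \<times> 'n) + 'm)^(('m \<times> 'n) + 'm))"
proof -
  interpret prob_space P by fact
  define C where "C = real (CARD(('m \<times> 'n) + 'm) * CARD(('m \<times> 'n) + 'm)) * (2 * CARD('m))"
  have gi: "integrable P (\<lambda>x. C * (2 + 2 * (norm x)\<^sup>2))"
    using assms(3) by (intro integrable_mult_right integrable_add integrable_const) auto
  have meas: "(\<lambda>x. indicator D x *\<^sub>R (MM x :: real^(('m \<times> 'n) + 'm)^(('m \<times> 'n) + 'm))) \<in> borel_measurable P"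
    using borel_measurable_continuous_on_indicator[OF assms(4) continuous_on_subset[OF cont_MM subset_UNIV]]
    using measurable_cong_sets[OF assms(2) refl] by blast
  show ?thesis
    unfolding set_integrable_def
  proof (rule Bochner_Integration.integrable_bound[OF gi meas], rule AE_I2)
    fix x
    have "norm (indicator D x *\<^sub>R (MM x :: real^(('m \<times> 'n) + 'm)^(('m \<times> 'n) + 'm))) \<le> norm (MM x :: real^(('m \<times> 'n) + 'm)^(('m \<times> 'n) + 'm))"
      by (simp add: indicator_def)
    also have "\<dots> \<le> C * (2 + 2 * (norm x)\<^sup>2)"
      using MM_norm[of x] unfolding C_def by (simp add: mult.assoc)
    also have "\<dots> \<le> norm (C * (2 + 2 * (norm x)\<^sup>2))" by simp
    finally show "norm (indicator D x *\<^sub>R (MM x :: real^(('m \<times> 'n) + 'm)^(('m \<times> 'n) + 'm))) \<le> norm (C * (2 + 2 * (norm x)\<^sup>2))" .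
  qed
qed

lemma key:
  fixes P :: "(real^'n::finite) measure"
  assumes "set_integrable P D (MM :: real^'n \<Rightarrow> real^(('m::finite \<times> 'n) + 'm)^(('m \<times> 'n) + 'm))"
  shows "d \<bullet> ((Hmat P D :: real^(('m \<times> 'n) + 'm)^(('m \<times> 'n) + 'm)) *v d)
     = 2 * (LINT x:D|P. (norm (Phi x d :: real^'m))\<^sup>2)"
proof -
  have H: "(Hmat P D :: real^(('m \<times> 'n) + 'm)^(('m \<times> 'n) + 'm))
      = integral\<^sup>L P (\<lambda>x. indicator D x *\<^sub>R (MM x :: real^(('m \<times> 'n) + 'm)^(('m \<times> 'n) + 'm)))"
    by (simp add: Hmat_def MM_def set_lebesgue_integral_def)
  define T where "T = (\<lambda>A::real^(('m \<times> 'n) + 'm)^(('m \<times> 'n) + 'm). d \<bullet> (A *v d))"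
  have "linear T"
    unfolding T_def
    by (rule linearI) (simp_all add: matrix_vector_mult_add_rdistrib inner_add_right
        scaleR_matrix_vector_assoc[symmetric])
  then have bl: "bounded_linear T" by (simp add: linear_conv_bounded_linear)
  have "T (integral\<^sup>L P (\<lambda>x. indicator D x *\<^sub>R (MM x :: real^(('m \<times> 'n) + 'm)^(('m \<times> 'n) + 'm))))
     = integral\<^sup>L P (\<lambda>x. T (indicator D x *\<^sub>R (MM x :: real^(('m \<times> 'n) + 'm)^(('m \<times> 'n) + 'm))))"
    using assms unfolding set_integrable_def by (rule integral_bounded_linear[OF bl, symmetric])
  also have "\<dots> = integral\<^sup>L P (\<lambda>x. 2 * (indicator D x *\<^sub>R (norm (Phi x d :: real^'m))\<^sup>2))"
    by (rule Bochner_Integration.integral_cong)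
       (simp_all add: T_def scaleR_matrix_vector_assoc[symmetric] MM_quad)
  also have "\<dots> = 2 * (LINT x:D|P. (norm (Phi x d :: real^'m))\<^sup>2)"
    by (simp add: set_lebesgue_integral_def)
  finally show ?thesis using H T_def by simp
qed

theorem corollary1:
  fixes K :: nat
    and q :: "nat \<Rightarrow> real"
    and P :: "nat \<Rightarrow> (real^'n::finite) measure"
    and D :: "nat \<Rightarrow> (real^'n) set"
    and W :: "nat \<Rightarrow> real^(('m::finite \<times> 'n) + 'm)"
  assumes "K \<ge> 1"
    and "\<And>k. k \<in> {1..K} \<Longrightarrow> prob_space (P k)"
    and "\<And>k. k \<in> {1..K} \<Longrightarrow> sets (P k) = sets borel"
    and "\<And>k. k \<in> {1..K} \<Longrightarrow> integrable (P k) (\<lambda>x. (norm x)\<^sup>2)"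
    and "\<And>k. k \<in> {1..K} \<Longrightarrow> D k \<in> sets borel"
    and "\<And>k. k \<in> {1..K} \<Longrightarrow> measure (P k) (D k) = 1"
    and "\<And>k. k \<in> {1..K} \<Longrightarrow> q k \<ge> 0"
    and "(\<Sum>k\<in>{1..K}. q k) = 1"
    and "\<And>k l. k \<in> {1..K} \<Longrightarrow> l \<in> {1..K} \<Longrightarrow>
           (Hmat (P k) (D k) :: real^(('m \<times> 'n) + 'm)^(('m \<times> 'n) + 'm)) = Hmat (P l) (D l)"
  shows "\<forall>w. objective K q P D W (\<Sum>k\<in>{1..K}. q k *\<^sub>R W k) \<le> objective K q P D W w"
proof -
  have one: "1 \<in> {1..K}" using assms(1) by simp
  define H where "H = (Hmat (P 1) (D 1) :: real^(('m \<times> 'n) + 'm)^(('m \<times> 'n) + 'm))"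
  define Q where "Q = (\<lambda>v::real^(('m \<times> 'n) + 'm). v \<bullet> (H *v v))"
  have Hk: "(Hmat (P k) (D k) :: real^(('m \<times> 'n) + 'm)^(('m \<times> 'n) + 'm)) = H" if "k \<in> {1..K}" for k
    using assms(9)[OF that one] unfolding H_def .
  have kk: "Q v = 2 * (LINT x:D k|P k. (norm (Phi x v :: real^'m))\<^sup>2)" if k: "k \<in> {1..K}" for k v
  proof -
    have si: "set_integrable (P k) (D k) (MM :: real^'n \<Rightarrow> real^(('m \<times> 'n) + 'm)^(('m \<times> 'n) + 'm))"
      using k assms(2-5) by (intro MM_set_integrable) auto
    show ?thesis using key[OF si, of v] Hk[OF k] unfolding Q_def by simp
  qed
  have Qnn: "Q v \<ge> 0" for v
    using kk[OF one, of v] by (simp add: set_lebesgue_integral_def)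
  have obj: "objective K q P D W w = (\<Sum>k\<in>{1..K}. q k * (Q (W k - w) / 2))" for w
    unfolding objective_def
  proof (rule sum.cong[OF refl])
    fix k assume k: "k \<in> {1..K}"
    have "(LINT x:D k|P k. dvg (Phi x (W k)) (Phi x w)) = (LINT x:D k|P k. (norm (Phi x (W k - w) :: real^'m))\<^sup>2)"
      unfolding dvg_def by (simp add: linear_diff[OF Phi_lin])
    then show "q k * (LINT x:D k|P k. dvg (Phi x (W k)) (Phi x w)) = q k * (Q (W k - w) / 2)"
      using kk[OF k, of "W k - w"] by simp
  qed
  define wh where "wh = (\<Sum>k\<in>{1..K}. q k *\<^sub>R W k)"
  have zero: "(\<Sum>k\<in>{1..K}. q k *\<^sub>R (W k - wh)) = 0"
  proof -
    have s1: "sum q {Suc 0..K} = 1" using assms(8) by simp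
    show ?thesis
      by (simp add: scaleR_diff_right sum_subtractf wh_def scaleR_sum_left[symmetric] s1)
  qed
  have lin0: "(\<Sum>k\<in>{1..K}. q k * ((W k - wh) \<bullet> c)) = 0" for c
  proof -
    have "(\<Sum>k\<in>{1..K}. q k * ((W k - wh) \<bullet> c)) = (\<Sum>k\<in>{1..K}. q k *\<^sub>R (W k - wh)) \<bullet> c"
      by (simp add: inner_sum_left)
    then show ?thesis using zero by simp
  qed
  show ?thesis
  proof
    fix w
    define b where "b = wh - w"
    have sw: "b \<bullet> (H *v a) = a \<bullet> (b v* H)" for a
      by (metis dot_lmul_matrix inner_commute)
    have exp: "Q (W k - w) = Q (W k - wh) + (W k - wh) \<bullet> (H *v b) + (W k - wh) \<bullet> (b v* H) + Q b" for k
    proof -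
      have e: "W k - w = (W k - wh) + b" unfolding b_def by simp
      have "Q (W k - w) = Q (W k - wh) + (W k - wh) \<bullet> (H *v b) + b \<bullet> (H *v (W k - wh)) + Q b"
        unfolding Q_def e
        by (simp only: matrix_vector_right_distrib inner_add_left inner_add_right add_ac)
      then show ?thesis unfolding sw .
    qed
    have "objective K q P D W w = (\<Sum>k\<in>{1..K}. q k * (Q (W k - wh) / 2))
        + (\<Sum>k\<in>{1..K}. q k * ((W k - wh) \<bullet> (H *v b))) / 2
        + (\<Sum>k\<in>{1..K}. q k * ((W k - wh) \<bullet> (b v* H))) / 2
        + (\<Sum>k\<in>{1..K}. q k) * Q b / 2"
    proof -
      have per: "q k * (Q (W k - w) / 2) = q k * (Q (W k - wh) / 2) + q k * ((W k - wh) \<bullet> (H *v b)) / 2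
         + q k * ((W k - wh) \<bullet> (b v* H)) / 2 + q k * Q b / 2" for k
        by (simp only: exp) (simp add: ring_distribs add_divide_distrib)
      show ?thesis
        unfolding obj per sum.distrib sum_divide_distrib[symmetric] sum_distrib_right by simp
    qed
    also have "\<dots> = objective K q P D W wh + Q b / 2"
      unfolding obj lin0 assms(8) by simp
    finally show "objective K q P D W (\<Sum>k\<in>{1..K}. q k *\<^sub>R W k) \<le> objective K q P D W w"
      using Qnn[of b] unfolding wh_def by simp
  qed
qed

end
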